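(* Let $R$ be a real $n\times n$ expansive matrix, $S=R^t$, $B\subset\mathbb{R}^n$ finite with $0\in B$ and $N=\#B$, $\tau_b(x)=R^{-1}(x+b)$, and let $\mu=\mu_B$ be the invariant measure of $(\tau_b)_{b\in B}$ with equal probabilities. Suppose $\mu$ has a spectrum $\Lambda$ for which there exist $a_1,\dots,a_p\in\mathbb{R}^n$ and sets $\Lambda_1,\dots,\Lambda_p\subset\operatorname{Per}(\hat\delta_B)$ such that $\Lambda=\bigcup_{i=1}^p(a_i+S\Lambda_i)$ as a disjoint union, and each $\Lambda_i$ is a spectrum for $\mu$. Then $p=N$ and $\{S^{-1}a_1,\dots,S^{-1}a_p\}$ is a spectrum for $\delta_B$, i.e. $(\delta_B,\{S^{-1}a_1,\dots,S^{-1}a_p\})$ is a spectral pair. *)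

theory Defs
  imports "HOL-Probability.Probability"
begin

definition expo :: "real^'n \<Rightarrow> real^'n \<Rightarrow> complex" where
  "expo l x = cis (2 * pi * (l \<bullet> x))"

definition expansive :: "real^'n^'n \<Rightarrow> bool" where
  "expansive R \<longleftrightarrow>
     (\<forall>z::complex. det (mat z - (\<chi> i j. complex_of_real (R $ i $ j))) = 0 \<longrightarrow> cmod z > 1)"

definition tau :: "real^'n^'n \<Rightarrow> real^'n \<Rightarrow> real^'n \<Rightarrow> real^'n" where
  "tau R b x = matrix_inv R *v (x + b)"

definition ifs_invariant :: "real^'n^'n \<Rightarrow> (real^'n) set \<Rightarrow> (real^'n) measure \<Rightarrow> bool" where
  "ifs_invariant R B \<mu> \<longleftrightarrow>
     sets \<mu> = sets borel \<and> prob_space \<mu> \<and>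
     (\<forall>A \<in> sets borel. emeasure \<mu> A =
        (\<Sum>b\<in>B. emeasure \<mu> (tau R b -` A)) / of_nat (card B))"

definition deltaB :: "(real^'n) set \<Rightarrow> (real^'n) measure" where
  "deltaB B = distr (measure_pmf (pmf_of_set B)) borel (\<lambda>x. x)"

definition deltaB_hat :: "(real^'n) set \<Rightarrow> real^'n \<Rightarrow> complex" where
  "deltaB_hat B x = (\<Sum>b\<in>B. expo b x) / of_nat (card B)"

definition Per :: "('a::plus \<Rightarrow> 'b) \<Rightarrow> 'a set" where
  "Per f = {t. \<forall>x. f (x + t) = f x}"

text \<open>Lambda is a spectrum for M: {e_l : l in Lambda} is an orthonormal basis of L^2(M),
  i.e. orthonormal and complete (only the zero element is orthogonal to all e_l).\<close>
definition is_spectrum :: "(real^'n) measure \<Rightarrow> (real^'n) set \<Rightarrow> bool" where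
  "is_spectrum M \<Lambda> \<longleftrightarrow>
     (\<forall>l\<in>\<Lambda>. \<forall>l'\<in>\<Lambda>. (LINT x|M. expo l x * cnj (expo l' x)) = (if l = l' then 1 else 0)) \<and>
     (\<forall>f \<in> borel_measurable M. integrable M (\<lambda>x. (cmod (f x))\<^sup>2) \<longrightarrow>
        (\<forall>l\<in>\<Lambda>. (LINT x|M. f x * cnj (expo l x)) = 0) \<longrightarrow> (AE x in M. f x = 0))"

end

theory Submission
  imports Defs
begin



lemma det_cplx: "det (\<chi> i j. complex_of_real ((R::real^'n^'n) $ i $ j)) = complex_of_real (det R)"
  by (simp add: det_def of_real_sum of_real_prod)

lemma det_uminus: "det (- (A::'a::comm_ring_1^'n^'n)) = (-1) ^ CARD('n) * det A"
proof -
  have "\<And>p. (\<Prod>i\<in>UNIV. (- A) $ i $ p i) = (-1) ^ CARD('n) * (\<Prod>i\<in>UNIV. A $ i $ p i)"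
    by (simp add: prod.distrib[symmetric] prod_constant[symmetric] del: prod_constant)
  then show ?thesis by (simp add: det_def sum_distrib_left algebra_simps)
qed

lemma expansive_invertible: assumes "expansive R" shows "invertible R"
proof (rule ccontr)
  assume "\<not> invertible R"
  then have "det R = 0" by (simp add: invertible_det_nz)
  then have "det (mat 0 - (\<chi> i j. complex_of_real (R $ i $ j))) = 0"
    by (simp add: det_uminus det_cplx)
  with assms show False unfolding expansive_def by fastforce
qed

lemma inv_transpose:
  fixes R :: "real^'n^'n" assumes "invertible R"
  shows "matrix_inv (transpose R) = transpose (matrix_inv R)"
    and "R ** matrix_inv R = mat 1" and "matrix_inv R ** R = mat 1"
proof -
  have *: "R ** matrix_inv R = mat 1 \<and> matrix_inv R ** R = mat 1"
    using assms unfolding invertible_def matrix_inv_def by (rule someI_ex)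
  then show "R ** matrix_inv R = mat 1" "matrix_inv R ** R = mat 1" by auto
  let ?T = "transpose (matrix_inv R)"
  have t: "transpose R ** ?T = mat 1" "?T ** transpose R = mat 1"
    using * by (metis matrix_transpose_mul transpose_mat)+
  then have "invertible (transpose R)" unfolding invertible_def by blast
  then have **: "transpose R ** matrix_inv (transpose R) = mat 1 \<and> matrix_inv (transpose R) ** transpose R = mat 1"
    unfolding invertible_def matrix_inv_def by (rule someI_ex)
  have "matrix_inv (transpose R) = matrix_inv (transpose R) ** (transpose R ** ?T)"
    using t by (simp add: matrix_mul_rid)
  also have "\<dots> = ?T" using ** by (simp add: matrix_mul_assoc matrix_mul_lid)
  finally show "matrix_inv (transpose R) = ?T" .
qed

lemma expo_add: "expo (u + v) x = expo u x * expo v x"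
  by (simp add: expo_def inner_add_left distrib_left cis_mult)
lemma expo_add2: "expo l (x + y) = expo l x * expo l y"
  by (simp add: expo_def inner_add_right distrib_left cis_mult)
lemma expo_comm: "expo l x = expo x l"
  by (simp add: expo_def inner_commute)
lemma expo_norm[simp]: "norm (expo l x) = 1"
  by (simp add: expo_def)
lemma expo_cnj: "cnj (expo l x) = expo (- l) x"
  by (simp add: expo_def cis_cnj)
lemma expo_mult_cnj: "expo l x * cnj (expo l' x) = expo (l - l') x"
  by (simp add: expo_def cis_cnj cis_mult inner_diff_left algebra_simps)
lemma expo_zero[simp]: "expo 0 x = 1" "expo l 0 = 1"
  by (simp_all add: expo_def)

lemma expo_tau:
  assumes "invertible R"
  shows "expo l (tau R b x) = expo (matrix_inv (transpose R) *v l) (x + b)"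
  using assms
  by (simp add: tau_def expo_def inv_transpose(1) dot_lmul_matrix)




lemma tau_measurable[measurable]: "tau R b \<in> borel_measurable borel"
proof -
  have "continuous_on UNIV ((*v) (matrix_inv R) \<circ> (\<lambda>x. x + b))"
    by (intro continuous_on_compose continuous_intros)
  then have "continuous_on UNIV (\<lambda>x. matrix_inv R *v (x + b))" by (simp add: comp_def)
  then show ?thesis unfolding tau_def[abs_def] by (rule borel_measurable_continuous_onI)
qed

locale ifs =
  fixes R :: "real^'n^'n" and B :: "(real^'n) set" and \<mu> :: "(real^'n) measure"
  assumes inv: "invertible R" and finB: "finite B" and neB: "B \<noteq> {}"
    and inva: "ifs_invariant R B \<mu>"
begin

lemma sets_mu[measurable_cong, simp]: "sets \<mu> = sets borel"
  using inva by (simp add: ifs_invariant_def)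
lemma space_mu[simp]: "space \<mu> = UNIV"
  using sets_eq_imp_space_eq[OF sets_mu] by simp
lemma prob: "prob_space \<mu>"
  using inva by (simp add: ifs_invariant_def)

lemma mu_bind: "\<mu> = measure_pmf (pmf_of_set B) \<bind> (\<lambda>b. distr \<mu> borel (tau R b))"
proof -
  have meas: "(\<lambda>b. distr \<mu> borel (tau R b)) \<in> measurable (measure_pmf (pmf_of_set B)) (subprob_algebra borel)"
    using prob by (auto simp: space_subprob_algebra subprob_space.subprob_space_distr prob_space_imp_subprob_space)
  show ?thesis
  proof (rule measure_eqI)
    show "sets \<mu> = sets (measure_pmf (pmf_of_set B) \<bind> (\<lambda>b. distr \<mu> borel (tau R b)))"
      using sets_bind[OF sets_kernel[OF meas]] by simp
  next
    fix A assume A: "A \<in> sets \<mu>"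
    then have "A \<in> sets borel" by simp
    have "emeasure (measure_pmf (pmf_of_set B) \<bind> (\<lambda>b. distr \<mu> borel (tau R b))) A
        = \<integral>\<^sup>+b. emeasure (distr \<mu> borel (tau R b)) A \<partial>measure_pmf (pmf_of_set B)"
      by (rule emeasure_bind) (use meas \<open>A \<in> sets borel\<close> in auto)
    also have "\<dots> = (\<Sum>b\<in>B. emeasure \<mu> (tau R b -` A)) / of_nat (card B)"
      using finB neB \<open>A \<in> sets borel\<close>
      by (simp add: nn_integral_pmf_of_set emeasure_distr)
    also have "\<dots> = emeasure \<mu> A"
      using inva \<open>A \<in> sets borel\<close> by (simp add: ifs_invariant_def)
    finally show "emeasure \<mu> A = emeasure (measure_pmf (pmf_of_set B) \<bind> (\<lambda>b. distr \<mu> borel (tau R b))) A" by simp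
  qed
qed

lemma ifs_nn:
  assumes [measurable]: "f \<in> borel_measurable borel"
  shows "(\<integral>\<^sup>+x. f x \<partial>\<mu>) = (\<Sum>b\<in>B. \<integral>\<^sup>+x. f (tau R b x) \<partial>\<mu>) / of_nat (card B)"
proof -
  have meas: "(\<lambda>b. distr \<mu> borel (tau R b)) \<in> measurable (measure_pmf (pmf_of_set B)) (subprob_algebra borel)"
    using prob by (auto simp: space_subprob_algebra subprob_space.subprob_space_distr prob_space_imp_subprob_space)
  have "(\<integral>\<^sup>+x. f x \<partial>\<mu>) = (\<integral>\<^sup>+b. \<integral>\<^sup>+x. f x \<partial>distr \<mu> borel (tau R b) \<partial>measure_pmf (pmf_of_set B))"
    by (subst mu_bind) (rule nn_integral_bind[OF _ meas], simp)
  also have "\<dots> = (\<Sum>b\<in>B. \<integral>\<^sup>+x. f (tau R b x) \<partial>\<mu>) / of_nat (card B)"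
    using finB neB by (simp add: nn_integral_pmf_of_set nn_integral_distr)
  finally show ?thesis .
qed

end



context ifs begin

lemma integrable_bdd:
  fixes f :: "real^'n \<Rightarrow> 'b::{banach,second_countable_topology}"
  assumes "f \<in> borel_measurable borel" "\<And>x. norm (f x) \<le> C"
  shows "integrable \<mu> f"
proof -
  interpret prob_space \<mu> by (rule prob)
  show ?thesis using assms by (intro integrable_const_bound[where B=C]) auto
qed

lemma ifs_int_nonneg:
  fixes f :: "real^'n \<Rightarrow> real"
  assumes f[measurable]: "f \<in> borel_measurable borel" and b: "\<And>x. 0 \<le> f x" "\<And>x. f x \<le> C"
  shows "integral\<^sup>L \<mu> f = (\<Sum>b\<in>B. integral\<^sup>L \<mu> (\<lambda>x. f (tau R b x))) / card B"
proof -
  have nb: "\<And>x. norm (f x) \<le> C" using b by (simp add: abs_of_nonneg)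
  have int: "integrable \<mu> f" by (rule integrable_bdd[OF f nb])
  have intb: "\<And>b. integrable \<mu> (\<lambda>x. f (tau R b x))"
    using nb by (intro integrable_bdd) auto
  have "ennreal (integral\<^sup>L \<mu> f) = (\<integral>\<^sup>+x. ennreal (f x) \<partial>\<mu>)"
    using int b by (simp add: nn_integral_eq_integral)
  also have "\<dots> = (\<Sum>b\<in>B. \<integral>\<^sup>+x. ennreal (f (tau R b x)) \<partial>\<mu>) / of_nat (card B)"
    by (rule ifs_nn) simp
  also have "\<dots> = (\<Sum>b\<in>B. ennreal (integral\<^sup>L \<mu> (\<lambda>x. f (tau R b x)))) / of_nat (card B)"
    using intb b by (simp add: nn_integral_eq_integral)
  also have "\<dots> = ennreal ((\<Sum>b\<in>B. integral\<^sup>L \<mu> (\<lambda>x. f (tau R b x))) / card B)"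
    using b finB neB
    by (simp add: ennreal_of_nat_eq_real_of_nat divide_ennreal integral_nonneg sum_nonneg card_gt_0_iff)
  finally show ?thesis using b
    by (subst (asm) ennreal_inj) (auto intro!: integral_nonneg divide_nonneg_nonneg sum_nonneg)
qed

lemma ifs_int_real:
  fixes f :: "real^'n \<Rightarrow> real"
  assumes f[measurable]: "f \<in> borel_measurable borel" and b: "\<And>x. \<bar>f x\<bar> \<le> C"
  shows "integral\<^sup>L \<mu> f = (\<Sum>b\<in>B. integral\<^sup>L \<mu> (\<lambda>x. f (tau R b x))) / card B"
proof -
  interpret prob_space \<mu> by (rule prob)
  have int: "integrable \<mu> f" using b by (intro integrable_bdd[OF f]) auto
  have intb: "\<And>b. integrable \<mu> (\<lambda>x. f (tau R b x))"
    using b by (intro integrable_bdd) auto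
  have l: "-C \<le> f x" and u: "f x \<le> C" for x using b[of x] by linarith+
  have "integral\<^sup>L \<mu> (\<lambda>x. f x + C) = (\<Sum>b\<in>B. integral\<^sup>L \<mu> (\<lambda>x. f (tau R b x) + C)) / card B"
  proof (rule ifs_int_nonneg[where C="2*C"])
    show "0 \<le> f x + C" for x using l[of x] by linarith
    show "f x + C \<le> 2*C" for x using u[of x] by linarith
  qed simp
  then have "integral\<^sup>L \<mu> f + C = (\<Sum>b\<in>B. integral\<^sup>L \<mu> (\<lambda>x. f (tau R b x)) + C) / card B"
    using int intb prob_space by simp
  also have "\<dots> = (\<Sum>b\<in>B. integral\<^sup>L \<mu> (\<lambda>x. f (tau R b x))) / card B + C"
    using finB neB by (simp add: sum.distrib add_divide_distrib card_gt_0_iff)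
  finally show ?thesis by simp
qed

lemma ifs_int:
  fixes f :: "real^'n \<Rightarrow> complex"
  assumes f[measurable]: "f \<in> borel_measurable borel" and b: "\<And>x. norm (f x) \<le> C"
  shows "integral\<^sup>L \<mu> f = (\<Sum>b\<in>B. integral\<^sup>L \<mu> (\<lambda>x. f (tau R b x))) / card B"
proof -
  have dec: "integral\<^sup>L \<mu> g = complex_of_real (integral\<^sup>L \<mu> (\<lambda>x. Re (g x))) + \<i> * complex_of_real (integral\<^sup>L \<mu> (\<lambda>x. Im (g x)))"
    if "(g :: real^'n \<Rightarrow> complex) \<in> borel_measurable borel" "\<And>x. norm (g x) \<le> C" for g
  proof -
      have i1: "integrable \<mu> (\<lambda>x. complex_of_real (Re (g x)))"
        using that by (intro integrable_bdd[where C=C]) (auto intro: order_trans[OF abs_Re_le_cmod])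
      have i2: "integrable \<mu> (\<lambda>x. \<i> * complex_of_real (Im (g x)))"
        using that by (intro integrable_bdd[where C=C]) (auto simp: norm_mult intro: order_trans[OF abs_Im_le_cmod])
    have "integral\<^sup>L \<mu> g = integral\<^sup>L \<mu> (\<lambda>x. complex_of_real (Re (g x)) + \<i> * complex_of_real (Im (g x)))"
      by (simp add: complex_eq[symmetric])
    also have "\<dots> = complex_of_real (integral\<^sup>L \<mu> (\<lambda>x. Re (g x))) + \<i> * complex_of_real (integral\<^sup>L \<mu> (\<lambda>x. Im (g x)))"
      by (simp add: Bochner_Integration.integral_add[OF i1 i2])
    finally show ?thesis .
  qed
  have bR: "\<And>x. \<bar>Re (f x)\<bar> \<le> C" "\<And>x. \<bar>Im (f x)\<bar> \<le> C"
    using b by (auto intro: order_trans[OF abs_Re_le_cmod] order_trans[OF abs_Im_le_cmod])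
  have "integral\<^sup>L \<mu> f = complex_of_real (integral\<^sup>L \<mu> (\<lambda>x. Re (f x))) + \<i> * complex_of_real (integral\<^sup>L \<mu> (\<lambda>x. Im (f x)))"
    by (rule dec[OF f b])
  also have "\<dots> = complex_of_real ((\<Sum>b\<in>B. integral\<^sup>L \<mu> (\<lambda>x. Re (f (tau R b x)))) / card B)
      + \<i> * complex_of_real ((\<Sum>b\<in>B. integral\<^sup>L \<mu> (\<lambda>x. Im (f (tau R b x)))) / card B)"
    by (subst ifs_int_real[OF _ bR(1)], simp, subst ifs_int_real[OF _ bR(2)], simp_all)
  also have "\<dots> = (\<Sum>b\<in>B. complex_of_real (integral\<^sup>L \<mu> (\<lambda>x. Re (f (tau R b x)))) + \<i> * complex_of_real (integral\<^sup>L \<mu> (\<lambda>x. Im (f (tau R b x))))) / card B"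
    by (simp add: sum.distrib sum_distrib_left add_divide_distrib)
  also have "\<dots> = (\<Sum>b\<in>B. integral\<^sup>L \<mu> (\<lambda>x. f (tau R b x))) / card B"
    by (intro arg_cong[where f="\<lambda>x. x / _"] sum.cong refl dec[symmetric]) (auto simp: b)
  finally show ?thesis .
qed

end



lemma expo_measurable[measurable]: "expo v \<in> borel_measurable borel"
proof -
  have "continuous_on UNIV (\<lambda>x. cis (2 * pi * (v \<bullet> x)))"
    by (intro continuous_intros)
  then show ?thesis unfolding expo_def[abs_def] by (rule borel_measurable_continuous_onI)
qed

lemma Per_expo:
  assumes "finite B" "B \<noteq> {}" "l \<in> Per (deltaB_hat B)" "b \<in> B"
  shows "expo l b = 1"
proof -
  have "deltaB_hat B (0 + l) = deltaB_hat B 0" using assms(3) unfolding Per_def by blast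
  then have "(\<Sum>b\<in>B. expo b l) = of_nat (card B)"
    using assms(1,2) by (simp add: deltaB_hat_def card_gt_0_iff)
  then have "Re (\<Sum>b\<in>B. expo b l) = real (card B)" by simp
  then have "(\<Sum>b\<in>B. cos (2 * pi * (b \<bullet> l))) = (\<Sum>b\<in>B. 1)"
    by (simp add: expo_def Re_sum)
  then have "(\<Sum>b\<in>B. 1 - cos (2 * pi * (b \<bullet> l))) = 0"
    by (simp add: sum_subtractf)
  then have "\<forall>b\<in>B. 1 - cos (2 * pi * (b \<bullet> l)) = 0"
    using assms(1) by (subst (asm) sum_nonneg_eq_0_iff) auto
  then have c: "cos (2 * pi * (b \<bullet> l)) = 1" using assms(4) by auto
  then have "sin (2 * pi * (b \<bullet> l)) = 0"
    using sin_cos_squared_add[of "2 * pi * (b \<bullet> l)"] by (simp add: power2_eq_square)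
  with c show ?thesis by (simp add: expo_def inner_commute cis.code complex_eq_iff)
qed

context ifs begin

definition muhat where "muhat v = integral\<^sup>L \<mu> (expo v)"

lemma muhat_S:
  "muhat v = deltaB_hat B (matrix_inv (transpose R) *v v) * muhat (matrix_inv (transpose R) *v v)"
proof -
  let ?w = "matrix_inv (transpose R) *v v"
  have "muhat v = (\<Sum>b\<in>B. integral\<^sup>L \<mu> (\<lambda>x. expo v (tau R b x))) / card B"
    unfolding muhat_def by (rule ifs_int[where C=1]) auto
  also have "\<dots> = (\<Sum>b\<in>B. expo ?w b * muhat ?w) / card B"
    by (simp add: expo_tau[OF inv] expo_add2 muhat_def mult.commute)
  also have "\<dots> = deltaB_hat B ?w * muhat ?w"
    by (simp add: deltaB_hat_def sum_distrib_right expo_comm)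
  finally show ?thesis .
qed

end



lemma dedekind:
  assumes "finite B"
  shows "(\<forall>w. (\<Sum>b\<in>B. \<alpha> b * expo b w) = 0) \<Longrightarrow> \<forall>b\<in>B. \<alpha> b = 0"
  using assms
proof (induction B arbitrary: \<alpha> rule: finite_induct)
  case empty then show ?case by simp
next
  case (insert b0 B)
  have rel: "(\<Sum>b\<in>B. \<alpha> b * expo b w) + \<alpha> b0 * expo b0 w = 0" for w
    using insert.prems insert.hyps by (simp add: add.commute)
  have rel2: "(\<Sum>b\<in>B. (\<alpha> b * (expo b y - expo b0 y)) * expo b w) = 0" for w y
  proof -
    have "(\<Sum>b\<in>B. \<alpha> b * expo b (w + y)) + \<alpha> b0 * expo b0 (w + y) = 0" by (rule rel)
    then have a: "(\<Sum>b\<in>B. \<alpha> b * expo b y * expo b w) + \<alpha> b0 * expo b0 y * expo b0 w = 0"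
      by (simp add: expo_add2 mult_ac)
    have b: "expo b0 y * ((\<Sum>b\<in>B. \<alpha> b * expo b w) + \<alpha> b0 * expo b0 w) = 0" by (simp add: rel)
    have "(\<Sum>b\<in>B. (\<alpha> b * (expo b y - expo b0 y)) * expo b w)
        = ((\<Sum>b\<in>B. \<alpha> b * expo b y * expo b w) + \<alpha> b0 * expo b0 y * expo b0 w)
          - expo b0 y * ((\<Sum>b\<in>B. \<alpha> b * expo b w) + \<alpha> b0 * expo b0 w)"
      by (simp add: algebra_simps sum_subtractf sum_distrib_left)
    also have "\<dots> = 0" using a b by simp
    finally show ?thesis .
  qed
  have z: "\<alpha> b * (expo b y - expo b0 y) = 0" if "b \<in> B" for b y
    using insert.IH[of "\<lambda>b. \<alpha> b * (expo b y - expo b0 y)"] rel2 that by blast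
  have zB: "\<alpha> b = 0" if "b \<in> B" for b
  proof -
    from that insert.hyps have ne: "b \<noteq> b0" by auto
    define y where "y = (1 / (2 * (norm (b - b0))\<^sup>2)) *\<^sub>R (b - b0)"
    have h: "(b - b0) \<bullet> y = 1/2"
      using ne by (simp add: y_def power2_norm_eq_inner)
    have "expo (b - b0) y = -1" unfolding expo_def h by (simp add: cis.code complex_eq_iff)
    moreover have "expo b y = expo b0 y * expo (b - b0) y"
      using expo_add[of b0 "b - b0" y] by simp
    ultimately have d: "expo b y - expo b0 y = -2 * expo b0 y" by simp
    have "expo b0 y \<noteq> 0" by (metis expo_norm norm_zero zero_neq_one)
    then have "-2 * expo b0 y \<noteq> 0" by simp
    then have "expo b y - expo b0 y \<noteq> 0" by (subst d)
    with z[OF that, of y] show ?thesis by simp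
  qed
  have "\<alpha> b0 = 0" using rel[of 0] zB by simp
  with zB show ?case by simp
qed

lemma integral_deltaB:
  fixes f :: "real^'n \<Rightarrow> complex"
  assumes "finite B" "B \<noteq> {}" "f \<in> borel_measurable borel"
  shows "(LINT x|deltaB B. f x) = (\<Sum>b\<in>B. f b) / of_nat (card B)"
proof -
  have m: "(\<lambda>x. x) \<in> measurable (measure_pmf (pmf_of_set B)) borel" by simp
  have "integral\<^sup>L (measure_pmf (pmf_of_set B)) f = (\<Sum>a\<in>B. pmf (pmf_of_set B) a *\<^sub>R f a)"
    by (rule integral_measure_pmf[OF assms(1)]) (use assms in auto)
  also have "\<dots> = (\<Sum>b\<in>B. f b) / of_nat (card B)"
    using assms by (simp add: sum_divide_distrib scaleR_conv_of_real)
  finally show ?thesis unfolding deltaB_def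
    by (subst integral_distr[OF m assms(3)]) (simp add: comp_def)
qed

context ifs begin

lemma spec_ne: assumes "is_spectrum \<mu> L" shows "L \<noteq> {}"
proof
  assume "L = {}"
  interpret prob_space \<mu> by (rule prob)
  have "AE x in \<mu>. (1::complex) = 0"
    using assms \<open>L = {}\<close> unfolding is_spectrum_def by (elim conjE allE[of _ "\<lambda>x. 1"]) auto
  then show False by simp
qed

lemma spec_orth: assumes "is_spectrum \<mu> L" "l \<in> L" "l' \<in> L" "l \<noteq> l'"
  shows "muhat (l - l') = 0"
  using assms unfolding is_spectrum_def muhat_def by (auto simp: expo_mult_cnj)

lemma muhat_minus: "muhat (- v) = cnj (muhat v)"
proof -
  have "expo (- v) = (\<lambda>x. cnj (expo v x))" by (simp add: fun_eq_iff expo_cnj)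
  then show ?thesis unfolding muhat_def by simp
qed

lemma spec_comp: assumes "is_spectrum \<mu> L" shows "\<exists>l\<in>L. muhat (v - l) \<noteq> 0"
proof (rule ccontr)
  interpret prob_space \<mu> by (rule prob)
  assume "\<not> ?thesis"
  then have "\<forall>l\<in>L. (LINT x|\<mu>. expo v x * cnj (expo l x)) = 0"
    by (auto simp: expo_mult_cnj muhat_def)
  moreover have "integrable \<mu> (\<lambda>x. (cmod (expo v x))\<^sup>2)" by simp
  ultimately have "AE x in \<mu>. expo v x = 0"
    using assms unfolding is_spectrum_def by (elim conjE allE[of _ "expo v"]) auto
  moreover have "expo v x \<noteq> 0" for x by (metis expo_norm norm_zero zero_neq_one)
  ultimately show False by simp
qed

end



context ifs begin

lemma mu_le:
  assumes "A \<in> sets borel" "b \<in> B"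
  shows "emeasure \<mu> (tau R b -` A) \<le> of_nat (card B) * emeasure \<mu> A"
proof -
  let ?X = "(\<Sum>b'\<in>B. emeasure \<mu> (tau R b' -` A))"
  have c: "(of_nat (card B) :: ennreal) \<noteq> 0" "(of_nat (card B) :: ennreal) \<noteq> top"
    using finB neB by (auto simp: card_gt_0_iff)
  have "emeasure \<mu> (tau R b -` A) \<le> ?X"
    by (rule member_le_sum) (use assms finB in auto)
  also have "?X = ?X * of_nat (card B) / of_nat (card B)"
    using c by (simp add: mult_divide_eq_ennreal)
  also have "\<dots> = of_nat (card B) * (?X / of_nat (card B))"
    by (simp add: ennreal_times_divide mult.commute)
  also have "?X / of_nat (card B) = emeasure \<mu> A"
    using inva assms by (simp add: ifs_invariant_def)
  finally show ?thesis .
qed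

lemma rn_real:
  fixes k :: "real^'n \<Rightarrow> real"
  assumes k[measurable]: "k \<in> borel_measurable borel" and k0: "\<And>x. 0 \<le> k x" and k1: "\<And>x. k x \<le> 1"
    and b: "b \<in> B"
  shows "\<exists>\<rho>. \<rho> \<in> borel_measurable borel \<and> (\<forall>x. 0 \<le> \<rho> x \<and> \<rho> x \<le> real (card B)) \<and>
     (\<forall>f::real^'n \<Rightarrow> complex. f \<in> borel_measurable borel \<longrightarrow>
        (LINT x|\<mu>. f (tau R b x) * complex_of_real (k x)) = (LINT x|\<mu>. f x * complex_of_real (\<rho> x)))"
proof -
  interpret prob_space \<mu> by (rule prob)
  let ?k = "\<lambda>x. ennreal (k x)"
  define Nb where "Nb = distr (density \<mu> ?k) borel (tau R b)"
  have sNb: "sets Nb = sets \<mu>" by (simp add: Nb_def)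
  have spNb: "space Nb = UNIV" by (simp add: Nb_def)
  have eNb: "emeasure Nb A \<le> of_nat (card B) * emeasure \<mu> A" if A[measurable]: "A \<in> sets borel" for A
  proof -
    have "emeasure Nb A = emeasure (density \<mu> ?k) (tau R b -` A)"
      by (simp add: Nb_def emeasure_distr)
    also have "\<dots> = (\<integral>\<^sup>+x. ?k x * indicator (tau R b -` A) x \<partial>\<mu>)"
      by (rule emeasure_density) (use measurable_sets[OF tau_measurable A, of R b] in auto)
    also have "\<dots> \<le> (\<integral>\<^sup>+x. indicator (tau R b -` A) x \<partial>\<mu>)"
      by (intro nn_integral_mono) (auto split: split_indicator simp: k1)
    also have "\<dots> = emeasure \<mu> (tau R b -` A)"
      by (rule nn_integral_indicator) (use measurable_sets[OF tau_measurable A, of R b] in auto)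
    also have "\<dots> \<le> of_nat (card B) * emeasure \<mu> A" by (rule mu_le[OF A b])
    finally show ?thesis .
  qed
  have ac: "absolutely_continuous \<mu> Nb"
    unfolding absolutely_continuous_def
  proof
    fix A assume "A \<in> null_sets \<mu>"
    then have A: "A \<in> sets borel" "emeasure \<mu> A = 0" by auto
    then have "emeasure Nb A = 0" using eNb[OF A(1)] by simp
    then show "A \<in> null_sets Nb" using A sNb by auto
  qed
  have "emeasure Nb (space Nb) \<le> of_nat (card B) * emeasure \<mu> UNIV"
    using eNb[of UNIV] spNb by simp
  also have "\<dots> < top" using emeasure_space_1 by (simp add: ennreal_mult_less_top of_nat_less_top)
  finally have "finite_measure Nb" by (intro finite_measureI) simp
  then have sfNb: "sigma_finite_measure Nb" by (simp add: finite_measure_def)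
  define r where "r = RN_deriv \<mu> Nb"
  have r_meas[measurable]: "r \<in> borel_measurable borel"
    unfolding r_def using borel_measurable_RN_deriv[of \<mu> Nb] by simp
  have dens: "density \<mu> r = Nb" unfolding r_def by (rule density_RN_deriv[OF ac sNb])
  have fin: "AE x in \<mu>. r x \<noteq> \<infinity>" unfolding r_def by (rule RN_deriv_finite[OF sfNb ac sNb])
  have bound: "AE x in \<mu>. r x \<le> of_nat (card B)"
  proof -
    define A where "A = {x. of_nat (card B) < r x}"
    have A[measurable]: "A \<in> sets borel" unfolding A_def by measurable
    have e1: "emeasure Nb A = (\<integral>\<^sup>+x. r x * indicator A x \<partial>\<mu>)"
      by (subst dens[symmetric]) (rule emeasure_density, auto)
    have e2: "(\<integral>\<^sup>+x. of_nat (card B) * indicator A x \<partial>\<mu>) = of_nat (card B) * emeasure \<mu> A"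
      by (simp add: nn_integral_cmult_indicator)
    have "AE x in \<mu>. r x * indicator A x \<le> of_nat (card B) * indicator A x"
    proof (rule ccontr)
      assume nAE: "\<not> (AE x in \<mu>. r x * indicator A x \<le> of_nat (card B) * indicator A x)"
      have "(\<integral>\<^sup>+x. of_nat (card B) * indicator A x \<partial>\<mu>) < (\<integral>\<^sup>+x. r x * indicator A x \<partial>\<mu>)"
      proof (rule nn_integral_less)
        show "(\<integral>\<^sup>+x. of_nat (card B) * indicator A x \<partial>\<mu>) \<noteq> \<infinity>"
          using e2 emeasure_finite[of A] by (simp add: ennreal_mult_eq_top_iff)
        show "AE x in \<mu>. of_nat (card B) * indicator A x \<le> r x * indicator A x"
          by (auto simp: A_def split: split_indicator intro: less_imp_le)
      qed (use nAE in auto)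
      then show False using e1 e2 eNb[OF A] by simp
    qed
    then show ?thesis
    proof eventually_elim
      case (elim x)
      show ?case
      proof (cases "of_nat (card B) < r x")
        case True then show ?thesis using elim by (simp add: A_def)
      next
        case False then show ?thesis by (simp add: not_less)
      qed
    qed
  qed
  define \<rho> where "\<rho> x = min (enn2real (r x)) (real (card B))" for x
  have \<rho>_meas[measurable]: "\<rho> \<in> borel_measurable borel" unfolding \<rho>_def by measurable
  have \<rho>b: "0 \<le> \<rho> x \<and> \<rho> x \<le> real (card B)" for x by (simp add: \<rho>_def)
  have "AE x in \<mu>. ennreal (\<rho> x) = r x"
    using fin bound
  proof eventually_elim
    case (elim x)
    then have "enn2real (r x) \<le> real (card B)"
      by (metis enn2real_mono enn2real_of_nat infinity_ennreal_def less_top_ennreal of_nat_less_top top.not_eq_extremum)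
    then show ?case using elim by (simp add: \<rho>_def min_def less_top)
  qed
  then have dens2: "density \<mu> (\<lambda>x. ennreal (\<rho> x)) = Nb"
    by (subst dens[symmetric]) (rule density_cong, auto)
  show ?thesis
  proof (intro exI conjI allI impI)
    show "\<rho> \<in> borel_measurable borel" by simp
    show "0 \<le> \<rho> x" "\<rho> x \<le> real (card B)" for x using \<rho>b by auto
    fix f :: "real^'n \<Rightarrow> complex" assume f[measurable]: "f \<in> borel_measurable borel"
    have "(LINT x|Nb. f x) = (LINT x|density \<mu> ?k. f (tau R b x))"
      unfolding Nb_def by (subst integral_distr) (auto simp: comp_def)
    also have "\<dots> = (LINT x|\<mu>. k x *\<^sub>R f (tau R b x))"
      by (rule integral_density) (auto simp: k0)
    finally have 1: "(LINT x|Nb. f x) = (LINT x|\<mu>. f (tau R b x) * complex_of_real (k x))"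
      by (simp add: scaleR_conv_of_real mult.commute)
    have "(LINT x|Nb. f x) = (LINT x|density \<mu> (\<lambda>x. ennreal (\<rho> x)). f x)"
      by (simp add: dens2)
    also have "\<dots> = (LINT x|\<mu>. \<rho> x *\<^sub>R f x)"
      by (rule integral_density) (auto simp: \<rho>b)
    finally show "(LINT x|\<mu>. f (tau R b x) * complex_of_real (k x)) = (LINT x|\<mu>. f x * complex_of_real (\<rho> x))"
      using 1 by (simp add: scaleR_conv_of_real mult.commute)
  qed
qed

end



lemma Sinv_S: assumes "invertible (R::real^'n^'n)"
  shows "matrix_inv (transpose R) *v (transpose R *v v) = v"
proof -
  have "matrix_inv (transpose R) ** transpose R = mat 1"
    using inv_transpose[OF assms] by (metis matrix_transpose_mul transpose_mat)
  then show ?thesis by (metis matrix_vector_mul_assoc matrix_vector_mul_lid)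
qed

lemma norm4: "norm (complex_of_real a - complex_of_real b + \<i> * (complex_of_real c - complex_of_real d)) \<le> \<bar>a\<bar> + \<bar>b\<bar> + (\<bar>c\<bar> + \<bar>d\<bar>)"
proof -
  have "norm (complex_of_real a - complex_of_real b + \<i> * (complex_of_real c - complex_of_real d))
     \<le> norm (complex_of_real a - complex_of_real b) + norm (\<i> * (complex_of_real c - complex_of_real d))"
    by (rule norm_triangle_ineq)
  also have "norm (complex_of_real a - complex_of_real b) \<le> \<bar>a\<bar> + \<bar>b\<bar>"
    using norm_triangle_ineq4[of "complex_of_real a" "complex_of_real b"] by simp
  also have "norm (\<i> * (complex_of_real c - complex_of_real d)) \<le> \<bar>c\<bar> + \<bar>d\<bar>"
    using norm_triangle_ineq4[of "complex_of_real c" "complex_of_real d"] by (simp add: norm_mult)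
  finally show ?thesis by simp
qed

context ifs begin

lemma rn_cplx:
  fixes k :: "real^'n \<Rightarrow> complex"
  assumes k[measurable]: "k \<in> borel_measurable borel" and k1: "\<And>x. norm (k x) \<le> 1"
    and b: "b \<in> B"
  shows "\<exists>\<psi>. \<psi> \<in> borel_measurable borel \<and> (\<forall>x. norm (\<psi> x) \<le> 4 * real (card B)) \<and>
     (\<forall>f::real^'n \<Rightarrow> complex. f \<in> borel_measurable borel \<longrightarrow> (\<forall>x. norm (f x) \<le> 1) \<longrightarrow>
        (LINT x|\<mu>. f (tau R b x) * k x) = (LINT x|\<mu>. f x * \<psi> x))"
proof -
  define kk where "kk j x = (if j = (0::nat) then max 0 (Re (k x)) else if j = 1 then max 0 (- Re (k x))
      else if j = 2 then max 0 (Im (k x)) else max 0 (- Im (k x)))" for j x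
  have kk_meas[measurable]: "kk j \<in> borel_measurable borel" for j unfolding kk_def by measurable
  have kk0: "0 \<le> kk j x" for j x by (simp add: kk_def)
  have kk1: "kk j x \<le> 1" for j x
  proof -
    have "\<bar>Re (k x)\<bar> \<le> 1" "\<bar>Im (k x)\<bar> \<le> 1"
      using abs_Re_le_cmod[of "k x"] abs_Im_le_cmod[of "k x"] k1[of x] by linarith+
    then show ?thesis unfolding kk_def by (simp add: abs_le_iff)
  qed
  have kdec: "k x = complex_of_real (kk 0 x) - complex_of_real (kk 1 x) + \<i> * (complex_of_real (kk 2 x) - complex_of_real (kk 3 x))" for x
    by (simp add: kk_def complex_eq_iff max_def)
  have "\<forall>j. \<exists>\<rho>. \<rho> \<in> borel_measurable borel \<and> (\<forall>x. 0 \<le> \<rho> x \<and> \<rho> x \<le> real (card B)) \<and>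
     (\<forall>f::real^'n \<Rightarrow> complex. f \<in> borel_measurable borel \<longrightarrow>
        (LINT x|\<mu>. f (tau R b x) * complex_of_real (kk j x)) = (LINT x|\<mu>. f x * complex_of_real (\<rho> x)))"
    using rn_real[OF kk_meas kk0 kk1 b] by blast
  from choice[OF this] obtain \<rho> where \<rho>all: "\<forall>j. \<rho> j \<in> borel_measurable borel \<and> (\<forall>x. 0 \<le> \<rho> j x \<and> \<rho> j x \<le> real (card B)) \<and>
     (\<forall>f::real^'n \<Rightarrow> complex. f \<in> borel_measurable borel \<longrightarrow>
        (LINT x|\<mu>. f (tau R b x) * complex_of_real (kk j x)) = (LINT x|\<mu>. f x * complex_of_real (\<rho> j x)))"
    by blast
  have \<rho>: "\<And>j. \<rho> j \<in> borel_measurable borel" "\<And>j x. 0 \<le> \<rho> j x \<and> \<rho> j x \<le> real (card B)"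
    "\<And>j f. f \<in> borel_measurable borel \<Longrightarrow>
        (LINT x|\<mu>. f (tau R b x) * complex_of_real (kk j x)) = (LINT x|\<mu>. f x * complex_of_real (\<rho> j x))"
    using \<rho>all by blast+
  note [measurable] = \<rho>(1)
  define \<psi> where "\<psi> x = complex_of_real (\<rho> 0 x) - complex_of_real (\<rho> 1 x) + \<i> * (complex_of_real (\<rho> 2 x) - complex_of_real (\<rho> 3 x))" for x
  show ?thesis
  proof (intro exI conjI allI impI)
    show "\<psi> \<in> borel_measurable borel" unfolding \<psi>_def by measurable
    show "norm (\<psi> x) \<le> 4 * real (card B)" for x
    proof -
      have "norm (\<psi> x) \<le> \<bar>\<rho> 0 x\<bar> + \<bar>\<rho> 1 x\<bar> + (\<bar>\<rho> 2 x\<bar> + \<bar>\<rho> 3 x\<bar>)"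
        unfolding \<psi>_def by (rule norm4)
      also have "\<dots> \<le> 4 * real (card B)" using \<rho>(2)[of 0 x] \<rho>(2)[of 1 x] \<rho>(2)[of 2 x] \<rho>(2)[of 3 x] by auto
      finally show ?thesis .
    qed
    fix f :: "real^'n \<Rightarrow> complex" assume f[measurable]: "f \<in> borel_measurable borel" and fb: "\<forall>x. norm (f x) \<le> 1"
    have i1: "integrable \<mu> (\<lambda>x. f (tau R b x) * complex_of_real (kk j x))" for j
    proof (rule integrable_bdd[where C=1])
      fix x
      have "norm (f (tau R b x)) * \<bar>kk j x\<bar> \<le> 1 * 1"
        by (rule mult_mono) (use fb kk0[of j x] kk1[of j x] in auto)
      then show "norm (f (tau R b x) * complex_of_real (kk j x)) \<le> 1" by (simp add: norm_mult)
    qed simp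
    have i2: "integrable \<mu> (\<lambda>x. f x * complex_of_real (\<rho> j x))" for j
    proof (rule integrable_bdd[where C="real (card B)"])
      fix x
      have "norm (f x) * \<bar>\<rho> j x\<bar> \<le> 1 * real (card B)"
        by (rule mult_mono) (use fb \<rho>(2)[of j x] in auto)
      then show "norm (f x * complex_of_real (\<rho> j x)) \<le> real (card B)" by (simp add: norm_mult)
    qed simp
    have "(LINT x|\<mu>. f (tau R b x) * k x) = (LINT x|\<mu>. f (tau R b x) * complex_of_real (kk 0 x) - f (tau R b x) * complex_of_real (kk 1 x)
       + \<i> * (f (tau R b x) * complex_of_real (kk 2 x) - f (tau R b x) * complex_of_real (kk 3 x)))"
      by (subst kdec) (simp add: algebra_simps)
    also have "\<dots> = (LINT x|\<mu>. f (tau R b x) * complex_of_real (kk 0 x)) - (LINT x|\<mu>. f (tau R b x) * complex_of_real (kk 1 x))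
       + \<i> * ((LINT x|\<mu>. f (tau R b x) * complex_of_real (kk 2 x)) - (LINT x|\<mu>. f (tau R b x) * complex_of_real (kk 3 x)))"
      using i1 by simp
    also have "\<dots> = (LINT x|\<mu>. f x * complex_of_real (\<rho> 0 x)) - (LINT x|\<mu>. f x * complex_of_real (\<rho> 1 x))
       + \<i> * ((LINT x|\<mu>. f x * complex_of_real (\<rho> 2 x)) - (LINT x|\<mu>. f x * complex_of_real (\<rho> 3 x)))"
      by (simp add: \<rho>(3)[OF f])
    also have "\<dots> = (LINT x|\<mu>. f x * complex_of_real (\<rho> 0 x) - f x * complex_of_real (\<rho> 1 x)
       + \<i> * (f x * complex_of_real (\<rho> 2 x) - f x * complex_of_real (\<rho> 3 x)))"
      using i2 by simp
    also have "\<dots> = (LINT x|\<mu>. f x * \<psi> x)"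
      by (simp add: \<psi>_def algebra_simps)
    finally show "(LINT x|\<mu>. f (tau R b x) * k x) = (LINT x|\<mu>. f x * \<psi> x)" .
  qed
qed

end



context ifs begin

lemma complete_part:
  fixes \<Lambda> :: "(real^'n) set" and p :: nat and a :: "nat \<Rightarrow> real^'n" and \<Lambda>s :: "nat \<Rightarrow> (real^'n) set"
    and g :: "real^'n \<Rightarrow> complex"
  assumes specL: "is_spectrum \<mu> \<Lambda>"
    and per: "\<forall>i\<in>{1..p}. \<Lambda>s i \<subseteq> Per (deltaB_hat B)"
    and L: "\<Lambda> = (\<Union>i\<in>{1..p}. (\<lambda>l. a i + transpose R *v l) ` \<Lambda>s i)"
    and g: "\<forall>i\<in>{1..p}. (\<Sum>y\<in>B. g y * cnj (expo (matrix_inv (transpose R) *v a i) y)) = 0"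
  shows "\<forall>b\<in>B. g b = 0"
proof -
  interpret prob_space \<mu> by (rule prob)
  let ?Si = "matrix_inv (transpose R)"
  have key: "(\<Sum>b\<in>B. cnj (g b) * expo w b) = 0" for w
  proof -
    have cm: "(\<lambda>x. cnj (expo w x)) \<in> borel_measurable borel" unfolding expo_cnj by simp
    have "\<forall>b\<in>B. \<exists>\<psi>. \<psi> \<in> borel_measurable borel \<and> (\<forall>x. norm (\<psi> x) \<le> 4 * real (card B)) \<and>
       (\<forall>f::real^'n \<Rightarrow> complex. f \<in> borel_measurable borel \<longrightarrow> (\<forall>x. norm (f x) \<le> 1) \<longrightarrow>
          (LINT x|\<mu>. f (tau R b x) * cnj (expo w x)) = (LINT x|\<mu>. f x * \<psi> x))"
      by (intro ballI rn_cplx) (auto simp: cm)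
    from bchoice[OF this] obtain \<psi> where \<psi>all: "\<forall>b\<in>B. \<psi> b \<in> borel_measurable borel \<and> (\<forall>x. norm (\<psi> b x) \<le> 4 * real (card B)) \<and>
       (\<forall>f::real^'n \<Rightarrow> complex. f \<in> borel_measurable borel \<longrightarrow> (\<forall>x. norm (f x) \<le> 1) \<longrightarrow>
          (LINT x|\<mu>. f (tau R b x) * cnj (expo w x)) = (LINT x|\<mu>. f x * \<psi> b x))"
      by blast
    have \<psi>m: "b \<in> B \<Longrightarrow> \<psi> b \<in> borel_measurable borel" for b using \<psi>all by blast
    have \<psi>b: "b \<in> B \<Longrightarrow> norm (\<psi> b x) \<le> 4 * real (card B)" for b x using \<psi>all by blast
    have \<psi>eq: "b \<in> B \<Longrightarrow> f \<in> borel_measurable borel \<Longrightarrow> (\<And>x. norm (f x) \<le> 1) \<Longrightarrow>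
          (LINT x|\<mu>. f (tau R b x) * cnj (expo w x)) = (LINT x|\<mu>. f x * \<psi> b x)" for b f
      using \<psi>all by blast
    define \<Psi> where "\<Psi> x = (\<Sum>b\<in>B. cnj (g b) * \<psi> b x)" for x
    have \<Psi>m[measurable]: "\<Psi> \<in> borel_measurable borel"
      unfolding \<Psi>_def by (intro borel_measurable_sum borel_measurable_times borel_measurable_const \<psi>m)
    define K where "K = (\<Sum>b\<in>B. norm (g b) * (4 * real (card B)))"
    have \<Psi>b: "norm (\<Psi> x) \<le> K" for x
      unfolding \<Psi>_def K_def
      by (rule order_trans[OF norm_sum] sum_mono)+ (auto simp: norm_mult intro!: mult_left_mono \<psi>b)
    have \<Psi>eq: "(LINT x|\<mu>. f x * \<Psi> x) = (\<Sum>b\<in>B. cnj (g b) * (LINT x|\<mu>. f (tau R b x) * cnj (expo w x)))"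
      if f[measurable]: "f \<in> borel_measurable borel" and fb: "\<And>x. norm (f x) \<le> 1" for f
    proof -
      have int: "integrable \<mu> (\<lambda>x. cnj (g b) * (f x * \<psi> b x))" if b: "b \<in> B" for b
      proof (rule integrable_bdd[where C="norm (g b) * (4 * real (card B))"])
        show "(\<lambda>x. cnj (g b) * (f x * \<psi> b x)) \<in> borel_measurable borel"
          by (intro borel_measurable_times borel_measurable_const \<psi>m b f)
        fix x
        have "norm (f x) * norm (\<psi> b x) \<le> 1 * (4 * real (card B))"
          by (rule mult_mono) (use fb[of x] \<psi>b[OF b, of x] in auto)
        then show "norm (cnj (g b) * (f x * \<psi> b x)) \<le> norm (g b) * (4 * real (card B))"
          by (simp add: norm_mult mult_left_mono)
      qed
      have "(LINT x|\<mu>. f x * \<Psi> x) = (LINT x|\<mu>. (\<Sum>b\<in>B. cnj (g b) * (f x * \<psi> b x)))"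
        by (simp add: \<Psi>_def sum_distrib_left mult_ac)
      also have "\<dots> = (\<Sum>b\<in>B. (LINT x|\<mu>. cnj (g b) * (f x * \<psi> b x)))"
        by (rule Bochner_Integration.integral_sum) (use int in auto)
      also have "\<dots> = (\<Sum>b\<in>B. cnj (g b) * (LINT x|\<mu>. f (tau R b x) * cnj (expo w x)))"
        by (intro sum.cong refl) (simp add: \<psi>eq[OF _ f fb])
      finally show ?thesis .
    qed
    have orth: "(LINT x|\<mu>. cnj (\<Psi> x) * cnj (expo l x)) = 0" if l: "l \<in> \<Lambda>" for l
    proof -
      from l L obtain i lam where i: "i \<in> {1..p}" and lam: "lam \<in> \<Lambda>s i" and leq: "l = a i + transpose R *v lam"
        by blast
      have lamper: "lam \<in> Per (deltaB_hat B)" using per i lam by blast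
      let ?c = "?Si *v a i"
      have Sil: "?Si *v l = ?c + lam"
        by (simp add: leq matrix_vector_right_distrib Sinv_S[OF inv, simplified])
      have e: "expo l (tau R b x) = expo ?c b * expo (?c + lam) x" if b: "b \<in> B" for b x
      proof -
        have "expo l (tau R b x) = expo (?c + lam) x * (expo ?c b * expo lam b)"
          by (simp add: expo_tau[OF inv] Sil expo_add2 expo_add)
        also have "expo lam b = 1" by (rule Per_expo[OF finB neB lamper b])
        finally show ?thesis by simp
      qed
      have "(LINT x|\<mu>. expo l x * \<Psi> x) = (\<Sum>b\<in>B. cnj (g b) * (LINT x|\<mu>. expo l (tau R b x) * cnj (expo w x)))"
        by (rule \<Psi>eq) auto
      also have "\<dots> = (\<Sum>b\<in>B. cnj (g b) * (expo ?c b * (LINT x|\<mu>. expo (?c + lam) x * cnj (expo w x))))"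
        by (intro sum.cong refl) (simp add: e mult.assoc)
      also have "\<dots> = cnj (\<Sum>b\<in>B. g b * cnj (expo ?c b)) * (LINT x|\<mu>. expo (?c + lam) x * cnj (expo w x))"
        by (simp add: sum_distrib_right mult_ac)
      also have "\<dots> = 0" using g i by simp
      finally have "(LINT x|\<mu>. expo l x * \<Psi> x) = 0" .
      then have "cnj (LINT x|\<mu>. expo l x * \<Psi> x) = 0" by simp
      moreover have "(\<lambda>x. cnj (\<Psi> x) * cnj (expo l x)) = (\<lambda>x. cnj (expo l x * \<Psi> x))"
        by (simp add: fun_eq_iff mult.commute)
      ultimately show ?thesis using Bochner_Integration.integral_cnj[of \<mu> "\<lambda>x. expo l x * \<Psi> x"] by metis
    qed
    have "AE x in \<mu>. cnj (\<Psi> x) = 0"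
    proof -
      have cnjm: "(\<lambda>z::complex. cnj z) \<in> borel_measurable borel"
        by (intro borel_measurable_continuous_onI continuous_intros)
      have "(\<lambda>x. cnj (\<Psi> x)) \<in> borel_measurable borel"
        using measurable_compose[OF \<Psi>m cnjm] by (simp add: comp_def)
      then have m: "(\<lambda>x. cnj (\<Psi> x)) \<in> borel_measurable \<mu>"
        by (subst measurable_cong_sets[OF sets_mu refl])
      have i: "integrable \<mu> (\<lambda>x. (cmod (cnj (\<Psi> x)))\<^sup>2)"
      proof (rule integrable_bdd[where C="K\<^sup>2"])
        fix x show "norm ((cmod (cnj (\<Psi> x)))\<^sup>2) \<le> K\<^sup>2"
          using \<Psi>b[of x] by (simp add: power_mono)
      qed (use \<open>(\<lambda>x. cnj (\<Psi> x)) \<in> borel_measurable borel\<close> in measurable)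
      have comp: "\<forall>f\<in>borel_measurable \<mu>. integrable \<mu> (\<lambda>x. (cmod (f x))\<^sup>2) \<longrightarrow>
        (\<forall>l\<in>\<Lambda>. (LINT x|\<mu>. f x * cnj (expo l x)) = 0) \<longrightarrow> (AE x in \<mu>. f x = 0)"
        using specL unfolding is_spectrum_def by blast
      show ?thesis by (rule comp[rule_format, OF m i]) (use orth in auto)
    qed
    then have AE0: "AE x in \<mu>. \<Psi> x = 0" by simp
    have "(LINT x|\<mu>. expo (transpose R *v w) x * \<Psi> x) = 0"
      by (rule integral_eq_zero_AE) (use AE0 in auto)
    moreover have "(LINT x|\<mu>. expo (transpose R *v w) x * \<Psi> x)
        = (\<Sum>b\<in>B. cnj (g b) * (LINT x|\<mu>. expo (transpose R *v w) (tau R b x) * cnj (expo w x)))"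
      by (rule \<Psi>eq) auto
    moreover have "expo (transpose R *v w) (tau R b x) * cnj (expo w x) = expo w b" for b x
      by (simp add: expo_tau[OF inv] Sinv_S[OF inv, simplified] expo_add2 mult.commute[of "expo w x"] mult.assoc expo_mult_cnj)
    moreover have "prob UNIV = 1" using prob_space by simp
    ultimately have "(\<Sum>b\<in>B. cnj (g b) * expo w b) = 0" by simp
    then show ?thesis .
  qed
  have "\<forall>b\<in>B. cnj (g b) = 0"
    by (rule dedekind[OF finB]) (use key in \<open>simp add: expo_comm\<close>)
  then show ?thesis by simp
qed

end



lemma sumB_e:
  assumes "finite B" "B \<noteq> {}"
  shows "(\<Sum>y\<in>B. expo u y * cnj (expo v y)) = of_nat (card B) * deltaB_hat B (u - v)"
  using assms by (simp add: expo_mult_cnj deltaB_hat_def expo_comm[of "u - v"])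

lemma deltaB_hat0: assumes "finite B" "B \<noteq> {}" shows "deltaB_hat B 0 = 1"
  using assms by (simp add: deltaB_hat_def)

lemma Per_shift:
  fixes f :: "'a::ab_group_add \<Rightarrow> 'b"
  assumes "t \<in> Per f" shows "f (x + t) = f x" "f (x - t) = f x"
proof -
  show "f (x + t) = f x" using assms by (simp add: Per_def)
  from assms have "\<forall>y. f (y + t) = f y" by (simp add: Per_def)
  then have "f ((x - t) + t) = f (x - t)" by blast
  then show "f (x - t) = f x" by simp
qed

theorem proposition3p9:
  fixes R :: "real^'n^'n" and B :: "(real^'n) set" and \<mu> :: "(real^'n) measure"
    and \<Lambda> :: "(real^'n) set" and p :: nat
    and a :: "nat \<Rightarrow> real^'n" and \<Lambda>s :: "nat \<Rightarrow> (real^'n) set"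
  assumes "expansive R"
    and "finite B" and "0 \<in> B"
    and "ifs_invariant R B \<mu>"
    and "is_spectrum \<mu> \<Lambda>"
    and "\<forall>i\<in>{1..p}. \<Lambda>s i \<subseteq> Per (deltaB_hat B)"
    and "\<Lambda> = (\<Union>i\<in>{1..p}. (\<lambda>l. a i + transpose R *v l) ` \<Lambda>s i)"
    and "\<forall>i\<in>{1..p}. \<forall>j\<in>{1..p}. i \<noteq> j \<longrightarrow>
           ((\<lambda>l. a i + transpose R *v l) ` \<Lambda>s i) \<inter> ((\<lambda>l. a j + transpose R *v l) ` \<Lambda>s j) = {}"
    and "\<forall>i\<in>{1..p}. is_spectrum \<mu> (\<Lambda>s i)"
  shows "p = card B \<and> is_spectrum (deltaB B) ((\<lambda>i. matrix_inv (transpose R) *v a i) ` {1..p})"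
proof -
  note exp = assms(1) and finB = assms(2) and specL = assms(5) and per = assms(6) and L = assms(7)
    and disj = assms(8) and specs = assms(9)
  have inv: "invertible R" by (rule expansive_invertible[OF exp])
  have neB: "B \<noteq> {}" using assms(3) by auto
  interpret ifs R B \<mu> using inv finB neB assms(4) by unfold_locales
  let ?Si = "matrix_inv (transpose R)"
  define c where "c i = ?Si *v a i" for i
  have SiS: "?Si *v (transpose R *v v) = v" for v by (rule Sinv_S[OF inv])
  have Ncard: "card B > 0" using finB neB by (simp add: card_gt_0_iff)
  have orthc: "deltaB_hat B (c i - c j) = 0" if i: "i \<in> {1..p}" and j: "j \<in> {1..p}" and ij: "i \<noteq> j" for i j
  proof (rule ccontr)
    assume nz: "deltaB_hat B (c i - c j) \<noteq> 0"
    obtain lam' where lam': "lam' \<in> \<Lambda>s j" using spec_ne[of "\<Lambda>s j"] specs j by blast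
    have lam'per: "lam' \<in> Per (deltaB_hat B)" using per j lam' by blast
    have z: "muhat (c i - c j + lam - lam') = 0" if lam: "lam \<in> \<Lambda>s i" for lam
    proof -
      have lamper: "lam \<in> Per (deltaB_hat B)" using per i lam by blast
      let ?l = "a i + transpose R *v lam" and ?l' = "a j + transpose R *v lam'"
      have inL: "?l \<in> \<Lambda>" "?l' \<in> \<Lambda>" using L i j lam lam' by blast+
      have ne: "?l \<noteq> ?l'" using disj i j ij lam lam' by blast
      have "muhat (?l - ?l') = 0" by (rule spec_orth[OF specL inL ne])
      moreover have "?Si *v (?l - ?l') = c i - c j + lam - lam'"
        by (simp only: matrix_vector_mult_diff_distrib matrix_vector_right_distrib SiS c_def) (simp add: algebra_simps)
      moreover have "deltaB_hat B (c i - c j + lam - lam') = deltaB_hat B (c i - c j)"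
        using Per_shift[OF lamper] Per_shift[OF lam'per] by simp
      ultimately show ?thesis using muhat_S[of "?l - ?l'"] nz by simp
    qed
    obtain lam where lam: "lam \<in> \<Lambda>s i" and nz2: "muhat ((lam' - (c i - c j)) - lam) \<noteq> 0"
      using spec_comp[of "\<Lambda>s i" "lam' - (c i - c j)"] specs i by blast
    have e: "(lam' - (c i - c j)) - lam = - (c i - c j + lam - lam')" by (simp add: algebra_simps)
    have "muhat ((lam' - (c i - c j)) - lam) = cnj (muhat (c i - c j + lam - lam'))"
      unfolding e by (rule muhat_minus)
    with z[OF lam] nz2 show False by simp
  qed
  have cinj: "inj_on c {1..p}"
  proof (rule inj_onI, rule ccontr)
    fix i j assume "i \<in> {1..p}" "j \<in> {1..p}" "c i = c j" "i \<noteq> j"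
    then show False using orthc[of i j] deltaB_hat0[OF finB neB] by simp
  qed
  have ip: "(\<Sum>y\<in>B. expo (c i) y * cnj (expo (c j) y)) = (if i = j then of_nat (card B) else 0)"
    if "i \<in> {1..p}" "j \<in> {1..p}" for i j
    using that orthc[of i j] by (simp add: sumB_e[OF finB neB] deltaB_hat0[OF finB neB])
  have compl: "\<forall>b\<in>B. g b = 0" if "\<forall>i\<in>{1..p}. (\<Sum>y\<in>B. g y * cnj (expo (c i) y)) = 0" for g
    by (rule complete_part[OF specL per L]) (use that in \<open>simp add: c_def\<close>)
  have pN: "p = card B"
  proof -
    obtain b where b: "b \<in> B" using neB by blast
    define r where "r x = (if x = b then 1 else 0) - (\<Sum>i\<in>{1..p}. (cnj (expo (c i) b) / of_nat (card B)) * expo (c i) x)" for x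
    have "\<forall>j\<in>{1..p}. (\<Sum>y\<in>B. r y * cnj (expo (c j) y)) = 0"
    proof
      fix j assume j: "j \<in> {1..p}"
      define \<alpha> where "\<alpha> i = cnj (expo (c i) b) / of_nat (card B)" for i
      have A: "r y * cnj (expo (c j) y) = (if y = b then cnj (expo (c j) b) else 0)
          - (\<Sum>i\<in>{1..p}. \<alpha> i * (expo (c i) y * cnj (expo (c j) y)))" for y
        by (simp add: r_def \<alpha>_def left_diff_distrib right_diff_distrib sum_distrib_right sum_distrib_left mult_ac)
      have "(\<Sum>y\<in>B. r y * cnj (expo (c j) y)) = (\<Sum>y\<in>B. (if y = b then cnj (expo (c j) b) else 0))
          - (\<Sum>y\<in>B. \<Sum>i\<in>{1..p}. \<alpha> i * (expo (c i) y * cnj (expo (c j) y)))"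
        by (simp only: A sum_subtractf)
      also have "\<dots> = cnj (expo (c j) b)
          - (\<Sum>i\<in>{1..p}. (cnj (expo (c i) b) / of_nat (card B)) * (\<Sum>y\<in>B. expo (c i) y * cnj (expo (c j) y)))"
        using b finB by (subst sum.swap) (simp add: sum_distrib_left \<alpha>_def)
      also have "\<dots> = cnj (expo (c j) b) - (\<Sum>i\<in>{1..p}. (if i = j then cnj (expo (c i) b) else 0))"
        using Ncard by (intro arg_cong2[where f="(-)"] refl sum.cong) (auto simp: ip[OF _ j])
      also have "\<dots> = 0" using j by (simp add: sum.delta')
      finally show "(\<Sum>y\<in>B. r y * cnj (expo (c j) y)) = 0" .
    qed
    then have "r b = 0" using compl b by blast
    moreover have "r b = 1 - of_nat p / of_nat (card B)"
    proof -
      have "cnj (expo (c i) b) * expo (c i) b = 1" for i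
        using expo_mult_cnj[of "c i" b "c i"] by (simp add: mult.commute)
      then show ?thesis by (simp add: r_def sum_divide_distrib[symmetric] mult.commute[of _ "expo _ b"])
    qed
    ultimately have "of_nat p = (of_nat (card B) :: complex)" using Ncard by (simp add: field_simps)
    then show ?thesis by (simp only: of_nat_eq_iff)
  qed
  have sets_d: "sets (deltaB B) = sets borel" by (simp add: deltaB_def)
  have spec_d: "is_spectrum (deltaB B) (c ` {1..p})"
    unfolding is_spectrum_def
  proof (intro conjI ballI impI)
    fix l l' assume "l \<in> c ` {1..p}" "l' \<in> c ` {1..p}"
    then obtain i j where i: "i \<in> {1..p}" "l = c i" and j: "j \<in> {1..p}" "l' = c j" by blast
    have m: "(\<lambda>x. expo l x * cnj (expo l' x)) \<in> borel_measurable borel"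
      by (simp add: expo_mult_cnj)
    have "(LINT x|deltaB B. expo l x * cnj (expo l' x)) = (\<Sum>y\<in>B. expo l y * cnj (expo l' y)) / of_nat (card B)"
      by (rule integral_deltaB[OF finB neB m])
    also have "\<dots> = (if i = j then 1 else 0)" using ip[OF i(1) j(1)] i j Ncard by simp
    also have "(i = j) = (l = l')" using cinj i j by (auto dest: inj_onD)
    finally show "(LINT x|deltaB B. expo l x * cnj (expo l' x)) = (if l = l' then 1 else 0)" .
  next
    fix f :: "real^'n \<Rightarrow> complex"
    assume fm: "f \<in> borel_measurable (deltaB B)" and "integrable (deltaB B) (\<lambda>x. (cmod (f x))\<^sup>2)"
      and orth: "\<forall>l\<in>c ` {1..p}. (LINT x|deltaB B. f x * cnj (expo l x)) = 0"
    have fb[measurable]: "f \<in> borel_measurable borel" using fm by (simp add: measurable_cong_sets[OF sets_d refl])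
    have "\<forall>i\<in>{1..p}. (\<Sum>y\<in>B. f y * cnj (expo (c i) y)) = 0"
    proof
      fix i assume i: "i \<in> {1..p}"
      have m: "(\<lambda>x. f x * cnj (expo (c i) x)) \<in> borel_measurable borel"
        by (simp add: expo_cnj)
      have "(\<Sum>y\<in>B. f y * cnj (expo (c i) y)) / of_nat (card B) = 0"
        using orth i integral_deltaB[OF finB neB m] by auto
      then show "(\<Sum>y\<in>B. f y * cnj (expo (c i) y)) = 0" using Ncard by simp
    qed
    then have fz: "\<forall>b\<in>B. f b = 0" by (rule compl)
    have m1: "(\<lambda>x. x) \<in> measurable (measure_pmf (pmf_of_set B)) borel" by simp
    show "AE x in deltaB B. f x = 0"
      unfolding deltaB_def
      by (subst AE_distr_iff[OF m1]) (use fz finB neB in \<open>auto simp: AE_measure_pmf_iff\<close>)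
  qed
  show ?thesis using pN spec_d by (simp add: c_def)
qed



end
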